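(* Let $L\subseteq Q$ be an extension of Lie algebras such that $Q$ is a weak algebra of quotients of $L$, and let $I$ be an ideal of $L$ with $\mathrm{Ann}_L(I)=0$. Then $\mathrm{r.ann}_{A(Q)}(A_Q(I))=0$.
   Context: Lie algebras over a commutative unital ring $\Phi$. $\mathrm{ad}_x(y)=[x,y]$; $A(Q)$ is the associative subalgebra of $\mathrm{End}_\Phi(Q)$ generated by all $\mathrm{ad}_x$, $x\in Q$; for $I\subseteq L\subseteq Q$, $A_Q(I)$ is the subalgebra of $A(Q)$ generated by $\{\mathrm{ad}_x:x\in I\}$. $\mathrm{Ann}_L(X)=\{a\in L:[a,X]=0\}$. For an associative algebra $B$ and $X\subseteq B$, $\mathrm{r.ann}_B(X)=\{b\in B:Xb=0\}$. $Q$ is a weak algebra of quotients of $L$ if for every nonzero $q\in Q$ there is $x\in L$ with $0\ne[x,q]\in L$. *)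

theory Defs
  imports Main "HOL.Modules"
begin

locale lie_algebra = module scale
  for scale :: "'a::comm_ring_1 \<Rightarrow> 'b::ab_group_add \<Rightarrow> 'b" +
  fixes br :: "'b \<Rightarrow> 'b \<Rightarrow> 'b"
  assumes br_add_left: "br (x + y) z = br x z + br y z"
    and br_add_right: "br x (y + z) = br x y + br x z"
    and br_scale_left: "br (scale c x) y = scale c (br x y)"
    and br_scale_right: "br x (scale c y) = scale c (br x y)"
    and br_alt: "br x x = 0"
    and jacobi: "br x (br y z) + br y (br z x) + br z (br x y) = 0"

definition submodule :: "('a::comm_ring_1 \<Rightarrow> 'b::ab_group_add \<Rightarrow> 'b) \<Rightarrow> 'b set \<Rightarrow> bool" where
  "submodule scale S \<longleftrightarrow> 0 \<in> S \<and> (\<forall>x\<in>S. \<forall>y\<in>S. x + y \<in> S) \<and> (\<forall>c. \<forall>x\<in>S. scale c x \<in> S)"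

definition lie_subalgebra :: "('a::comm_ring_1 \<Rightarrow> 'b::ab_group_add \<Rightarrow> 'b) \<Rightarrow> ('b \<Rightarrow> 'b \<Rightarrow> 'b) \<Rightarrow> 'b set \<Rightarrow> bool" where
  "lie_subalgebra scale br L \<longleftrightarrow> submodule scale L \<and> (\<forall>x\<in>L. \<forall>y\<in>L. br x y \<in> L)"

definition lie_ideal :: "('a::comm_ring_1 \<Rightarrow> 'b::ab_group_add \<Rightarrow> 'b) \<Rightarrow> ('b \<Rightarrow> 'b \<Rightarrow> 'b) \<Rightarrow> 'b set \<Rightarrow> 'b set \<Rightarrow> bool" where
  "lie_ideal scale br I L \<longleftrightarrow> I \<subseteq> L \<and> submodule scale I \<and> (\<forall>x\<in>L. \<forall>y\<in>I. br x y \<in> I)"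

text \<open>The whole Lie algebra (carrier UNIV) is a weak algebra of quotients of L.\<close>
definition weak_quotients :: "('b::ab_group_add \<Rightarrow> 'b \<Rightarrow> 'b) \<Rightarrow> 'b set \<Rightarrow> bool" where
  "weak_quotients br L \<longleftrightarrow> (\<forall>q. q \<noteq> 0 \<longrightarrow> (\<exists>x\<in>L. br x q \<noteq> 0 \<and> br x q \<in> L))"

definition Ann :: "('b::zero \<Rightarrow> 'b \<Rightarrow> 'b) \<Rightarrow> 'b set \<Rightarrow> 'b set \<Rightarrow> 'b set" where
  "Ann br L X = {a \<in> L. \<forall>x\<in>X. br a x = 0}"

definition ad :: "('b \<Rightarrow> 'b \<Rightarrow> 'b) \<Rightarrow> 'b \<Rightarrow> 'b \<Rightarrow> 'b" where
  "ad br x = (\<lambda>y. br x y)"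

text \<open>The (non-unital) associative subalgebra of End(Q) generated by a set S of endomorphisms.\<close>
inductive_set gen_alg :: "('a::comm_ring_1 \<Rightarrow> 'b::ab_group_add \<Rightarrow> 'b) \<Rightarrow> ('b \<Rightarrow> 'b) set \<Rightarrow> ('b \<Rightarrow> 'b) set"
  for scale :: "'a::comm_ring_1 \<Rightarrow> 'b::ab_group_add \<Rightarrow> 'b" and S :: "('b \<Rightarrow> 'b) set" where
  gen: "f \<in> S \<Longrightarrow> f \<in> gen_alg scale S"
| zero: "(\<lambda>_. 0) \<in> gen_alg scale S"
| add: "f \<in> gen_alg scale S \<Longrightarrow> g \<in> gen_alg scale S \<Longrightarrow> (\<lambda>v. f v + g v) \<in> gen_alg scale S"
| smult: "f \<in> gen_alg scale S \<Longrightarrow> (\<lambda>v. scale c (f v)) \<in> gen_alg scale S"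
| comp: "f \<in> gen_alg scale S \<Longrightarrow> g \<in> gen_alg scale S \<Longrightarrow> f \<circ> g \<in> gen_alg scale S"

text \<open>A_Q(X): subalgebra of A(Q) generated by ad_x, x in X; A(Q) = A_Q(UNIV).\<close>
definition A_alg :: "('a::comm_ring_1 \<Rightarrow> 'b::ab_group_add \<Rightarrow> 'b) \<Rightarrow> ('b \<Rightarrow> 'b \<Rightarrow> 'b) \<Rightarrow> 'b set \<Rightarrow> ('b \<Rightarrow> 'b) set" where
  "A_alg scale br X = gen_alg scale (ad br ` X)"

definition rann :: "('b \<Rightarrow> 'b::zero) set \<Rightarrow> ('b \<Rightarrow> 'b) set \<Rightarrow> ('b \<Rightarrow> 'b) set" where
  "rann B X = {b \<in> B. \<forall>a\<in>X. a \<circ> b = (\<lambda>_. 0)}"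

end

theory Submission
  imports Defs
begin

lemma lie_anti:
  assumes "lie_algebra scale br"
  shows "br x y = - br y x"
proof -
  interpret lie_algebra scale br by fact
  have "br (x+y) (x+y) = 0" by (rule br_alt)
  hence "br x x + br x y + (br y x + br y y) = 0"
    by (simp add: br_add_left br_add_right add_ac)
  hence "br x y + br y x = 0" by (simp add: br_alt)
  thus ?thesis by (simp add: eq_neg_iff_add_eq_0)
qed

lemma lie_zero_right:
  assumes "lie_algebra scale br"
  shows "br x 0 = 0"
proof -
  interpret lie_algebra scale br by fact
  have "br x (0+0) = br x 0 + br x 0" by (rule br_add_right)
  thus ?thesis by simp
qed

lemma gen_zero:
  assumes "lie_algebra scale br"
  shows "f \<in> gen_alg scale (ad br ` X) \<Longrightarrow> f 0 = 0"
proof (induction rule: gen_alg.induct)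
  case (gen f)
  then show ?case using lie_zero_right[OF assms] by (auto simp: ad_def)
next
  case (smult f c)
  interpret lie_algebra scale br by fact
  show ?case using smult by simp
qed auto

theorem mainTheorem8:
  fixes scale :: "'a::comm_ring_1 \<Rightarrow> 'b::ab_group_add \<Rightarrow> 'b"
    and br :: "'b \<Rightarrow> 'b \<Rightarrow> 'b"
    and L I :: "'b set"
  assumes "lie_algebra scale br"
    and "lie_subalgebra scale br L"
    and "weak_quotients br L"
    and "lie_ideal scale br I L"
    and "Ann br L I = {0}"
  shows "rann (A_alg scale br UNIV) (A_alg scale br I) = {(\<lambda>_. 0)}"
proof -
  interpret lie_algebra scale br by fact
  have anti: "\<And>x y. br x y = - br y x" using lie_anti[OF assms(1)] .
  have "\<mu> = (\<lambda>_. 0)" if mu: "\<mu> \<in> rann (A_alg scale br UNIV) (A_alg scale br I)" for \<mu>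
  proof
    fix q
    have kill: "br x (\<mu> q) = 0" if "x \<in> I" for x
    proof -
      have "ad br x \<in> A_alg scale br I" using that unfolding A_alg_def by (auto intro: gen_alg.gen)
      hence "ad br x \<circ> \<mu> = (\<lambda>_. 0)" using mu unfolding rann_def by auto
      thus ?thesis by (metis ad_def comp_apply)
    qed
    show "\<mu> q = 0"
    proof (rule ccontr)
      assume ne: "\<mu> q \<noteq> 0"
      then obtain y where y: "y \<in> L" "br y (\<mu> q) \<noteq> 0" "br y (\<mu> q) \<in> L"
        using assms(3) unfolding weak_quotients_def by blast
      have "br (br y (\<mu> q)) x = 0" if x: "x \<in> I" for x
      proof -
        have yx: "br y x \<in> I" using assms(4) x y(1) unfolding lie_ideal_def by blast
        have j: "br x (br y (\<mu> q)) + br y (br (\<mu> q) x) + br (\<mu> q) (br x y) = 0" by (rule jacobi)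
        have a1: "br (\<mu> q) x = 0" using kill[OF x] anti[of "\<mu> q" x] by simp
        have neg: "br (- a) b = - br a b" for a b
        proof -
          have "br (a + - a) b = br a b + br (-a) b" by (rule br_add_left)
          hence "br a b + br (-a) b = 0" using anti[of 0 b] lie_zero_right[OF assms(1), of b] by simp
          thus ?thesis by (simp add: eq_neg_iff_add_eq_0 add.commute)
        qed
        have a2: "br (\<mu> q) (br x y) = 0"
          using kill[OF yx] anti[of "\<mu> q" "br x y"] anti[of x y] neg by simp
        have "br x (br y (\<mu> q)) = 0" using j a1 a2 lie_zero_right[OF assms(1)] by simp
        thus ?thesis using anti[of "br y (\<mu> q)" x] by simp
      qed
      hence "br y (\<mu> q) \<in> Ann br L I" using y(3) unfolding Ann_def by blast
      thus False using assms(5) y(2) by blast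
    qed
  qed
  moreover have "(\<lambda>_. 0) \<in> rann (A_alg scale br UNIV) (A_alg scale br I)"
    unfolding rann_def A_alg_def
    using gen_zero[OF assms(1)] by (auto intro: gen_alg.zero)
  ultimately show ?thesis by blast
qed

end
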